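(* The static quadratic game in which each player $n=1,\ldots,N$ solves \[ \min_{\delta u_{n,:}} \; J_n(\bar u) + \frac{\partial J_n(\bar u)}{\partial u}\,\delta u + \frac{1}{2}\,\delta u^\top \frac{\partial^2 J_n(\bar u)}{\partial u^2}\,\delta u \] (whose stacked first-order conditions are exactly the Newton step $\frac{\partial \mathcal{J}(\bar u)}{\partial u}\delta u = -\mathcal{J}(\bar u)$) is equivalent to the dynamic game in which each player $n$ solves \[ \min_{\delta u_{n,:}} \; \frac{1}{2}\sum_{k=0}^T\left(\begin{bmatrix}1\\ \delta x_k\\ \delta u_{:,k}\end{bmatrix}^\top M_{n,k}\begin{bmatrix}1\\ \delta x_k\\ \delta u_{:,k}\end{bmatrix} + M^{1x}_{n,k}\,\Delta x_k\right) \] subject to $\delta x_0=0$, $\Delta x_0=0$, $\delta x_{k+1}=A_k\delta x_k + B_k\delta u_{:,k}$, $\Delta x_{k+1} = A_k\Delta x_k + R_k(\delta x_k,\delta u_{:,k})$, $k=0,1,\ldots,T$.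
   Context: Consider a deterministic finite-horizon dynamic game with $N$ players: state $x_k\in\mathbb{R}^{n_x}$, joint input $u_{:,k}=[u_{1,k}^\top,\ldots,u_{N,k}^\top]^\top$, dynamics $x_{k+1}=f_k(x_k,u_{:,k})$ with $x_0$ fixed, and player costs $J_n(u)=\sum_{k=0}^T c_{n,k}(x_k,u_{:,k})$, where $u$ stacks all inputs over all times and $u_{n,:}$ denotes player $n$'s inputs over all times. $\mathcal{J}(u)$ stacks the gradients $\partial J_n/\partial u_{n,:}$, $n=1,\ldots,N$. Let $(\bar x,\bar u)$ be a nominal trajectory satisfying the dynamics, $\delta u = u-\bar u$. Define, evaluated at $(\bar x,\bar u)$: $A_k=\partial f_k/\partial x_k$, $B_k=\partial f_k/\partial u_{:,k}$; $G_k^l$ the Hessian of the $l$-th component $f_k^l$ with respect to $(x_k,u_{:,k})$; $R_k(\delta x_k,\delta u_{:,k})$ the vector whose $l$-th entry is $[\delta x_k;\delta u_{:,k}]^\top G_k^l[\delta x_k;\delta u_{:,k}]$; and \[ M_{n,k}=\begin{bmatrix} 2c_{n,k} & \partial c_{n,k}/\partial x_k & \partial c_{n,k}/\partial u_{:,k}\\ (\partial c_{n,k}/\partial x_k)^\top & \partial^2 c_{n,k}/\partial x_k^2 & \partial^2 c_{n,k}/\partial x_k\partial u_{:,k}\\ (\partial c_{n,k}/\partial u_{:,k})^\top & \partial^2 c_{n,k}/\partial u_{:,k}\partial x_k & \partial^2 c_{n,k}/\partial u_{:,k}^2\end{bmatrix}, \] with block $M^{1x}_{n,k}=\partial c_{n,k}/\partial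 x_k$. The game states satisfy $\delta x_k=\sum_i \frac{\partial x_k}{\partial u_{:,i}}\delta u_{:,i}$ and $\Delta x_k^l=\sum_{i,j}\delta u_{:,i}^\top \frac{\partial^2 x_k^l}{\partial u_{:,i}\partial u_{:,j}}\delta u_{:,j}$. *)

theory Defs
  imports "HOL-Analysis.Analysis"
begin

text \<open>The full input trajectory u
  (all players, all times) is an element of the Euclidean space real^'nu^'t,
  where the finite type 't indexes the T+1 time steps through a bijection
  tm : {0..T} -> 't, so u_{:,k} = u $ tm k.  Each coordinate i of the joint input is owned by one
  player own i.\<close>

fun traj :: "(nat \<Rightarrow> ('x \<times> 'u) \<Rightarrow> 'x) \<Rightarrow> 'x \<Rightarrow> (nat \<Rightarrow> 'u) \<Rightarrow> nat \<Rightarrow> 'x" where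
  "traj f x0 u 0 = x0"
| "traj f x0 u (Suc k) = f k (traj f x0 u k, u k)"

definition game_cost ::
  "(nat \<Rightarrow> nat \<Rightarrow> ((real^'nx) \<times> (real^'nu)) \<Rightarrow> real) \<Rightarrow> (nat \<Rightarrow> ((real^'nx) \<times> (real^'nu)) \<Rightarrow> real^'nx)
   \<Rightarrow> real^'nx \<Rightarrow> nat \<Rightarrow> (nat \<Rightarrow> 't) \<Rightarrow> nat \<Rightarrow> real^'nu^'t \<Rightarrow> real" where
  "game_cost c f x0 T tm n u = (\<Sum>k\<le>T. c n k (traj f x0 (\<lambda>j. u $ tm j) k, u $ tm k))"

text \<open>First-order state variation: dx_0 = 0, dx_{k+1} = A_k dx_k + B_k du_k,
  where L k is the Jacobian of f_k at the nominal point, so that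
  A_k v = L k (v, 0) and B_k w = L k (0, w).\<close>
fun dx_traj :: "(nat \<Rightarrow> ('x::real_vector \<times> 'u::real_vector) \<Rightarrow> 'x) \<Rightarrow> (nat \<Rightarrow> 'u) \<Rightarrow> nat \<Rightarrow> 'x" where
  "dx_traj L du 0 = 0"
| "dx_traj L du (Suc k) = L k (dx_traj L du k, 0) + L k (0, du k)"

text \<open>Second-order state variation: Dx_0 = 0,
  Dx_{k+1} = A_k Dx_k + R_k(dx_k, du_k), where R k v is the vector whose l-th
  entry is v^T G_k^l v (Q k = second derivative of f_k at the nominal point,
  R_k(v) = Q k v v).\<close>
fun Dx_traj :: "(nat \<Rightarrow> ('x::real_vector \<times> 'u::real_vector) \<Rightarrow> 'x)
     \<Rightarrow> (nat \<Rightarrow> ('x \<times> 'u) \<Rightarrow> ('x \<times> 'u) \<Rightarrow> 'x) \<Rightarrow> (nat \<Rightarrow> 'u) \<Rightarrow> nat \<Rightarrow> 'x" where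
  "Dx_traj L Q du 0 = 0"
| "Dx_traj L Q du (Suc k) = L k (Dx_traj L Q du k, 0) + Q k (dx_traj L du k, du k) (dx_traj L du k, du k)"

text \<open>The quadratic form [1; dx; du]^T M [1; dx; du] written out blockwise, where
  c0 = c_{n,k}, D = derivative of c_{n,k} (so dc/dx v = D (v,0), dc/du w = D (0,w))
  and H = second derivative of c_{n,k} (Hessian blocks H (a,0) (b,0) etc.).\<close>
definition M_quad :: "real \<Rightarrow> (('x::real_vector \<times> 'u::real_vector) \<Rightarrow> real)
     \<Rightarrow> (('x \<times> 'u) \<Rightarrow> ('x \<times> 'u) \<Rightarrow> real) \<Rightarrow> 'x \<Rightarrow> 'u \<Rightarrow> real" where
  "M_quad c0 D H dx du =
     2 * c0 + D (dx, 0) + D (0, du) + D (dx, 0) + D (0, du)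
     + H (dx, 0) (dx, 0) + H (dx, 0) (0, du) + H (0, du) (dx, 0) + H (0, du) (0, du)"

definition nash_eq :: "nat \<Rightarrow> ('i \<Rightarrow> nat) \<Rightarrow> (nat \<Rightarrow> real^'i^'t \<Rightarrow> real) \<Rightarrow> real^'i^'t \<Rightarrow> bool" where
  "nash_eq N own \<Phi> v \<longleftrightarrow>
     (\<forall>n\<in>{1..N}. \<forall>w. (\<forall>t i. own i \<noteq> n \<longrightarrow> w $ t $ i = v $ t $ i) \<longrightarrow> \<Phi> n v \<le> \<Phi> n w)"

end

theory Submission
  imports Defs
begin

fun Dxx :: "(nat \<Rightarrow> ('x::real_vector \<times> 'u::real_vector) \<Rightarrow> 'x)
     \<Rightarrow> (nat \<Rightarrow> ('x \<times> 'u) \<Rightarrow> ('x \<times> 'u) \<Rightarrow> 'x) \<Rightarrow> (nat \<Rightarrow> 'u) \<Rightarrow> (nat \<Rightarrow> 'u) \<Rightarrow> nat \<Rightarrow> 'x" where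
  "Dxx L Q h v 0 = 0"
| "Dxx L Q h v (Suc k) = L k (Dxx L Q h v k, 0) + Q k (dx_traj L v k, v k) (dx_traj L h k, h k)"

lemma Dxx_diag: "Dxx L Q h h k = Dx_traj L Q h k"
  by (induction k) auto

lemma blin_pair: "blinfun_apply B (a, 0) + blinfun_apply B (0, b) = blinfun_apply B (a, b)"
proof -
  have "(a, b) = (a, 0) + (0, b)" by simp
  then show ?thesis by (metis blinfun.add_right)
qed

lemma quad_split:
  assumes "bounded_linear H"
  shows "blinfun_apply (H (a, b)) (a, b) =
    blinfun_apply (H (a, 0)) (a, 0) + blinfun_apply (H (a, 0)) (0, b)
    + blinfun_apply (H (0, b)) (a, 0) + blinfun_apply (H (0, b)) (0, b)"
proof -
  interpret bounded_linear H by fact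
  have e: "(a, b) = (a, 0) + (0, b)" by simp
  have "blinfun_apply (H (a, b)) (a, b) = blinfun_apply (H (a, 0) + H (0, b)) ((a, 0) + (0, b))"
    by (metis e add)
  also have "\<dots> = blinfun_apply (H (a, 0)) (a, b) + blinfun_apply (H (0, b)) (a, b)"
    by (simp add: blinfun.add_left)
  also have "\<dots> = (blinfun_apply (H (a, 0)) (a, 0) + blinfun_apply (H (a, 0)) (0, b))
      + (blinfun_apply (H (0, b)) (a, 0) + blinfun_apply (H (0, b)) (0, b))"
    by (simp only: blin_pair)
  finally show ?thesis by simp
qed

lemma traj_deriv:
  fixes f :: "nat \<Rightarrow> ((real^'nx) \<times> (real^'nu)) \<Rightarrow> real^'nx"
    and tm :: "nat \<Rightarrow> 't::finite"
  assumes fd: "\<forall>k\<le>T. \<forall>p. (f k has_derivative blinfun_apply (f' k p)) (at p)"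
  shows "k \<le> T \<Longrightarrow> ((\<lambda>u::real^'nu^'t. traj f x0 (\<lambda>j. u $ tm j) k) has_derivative
     (\<lambda>h. dx_traj (\<lambda>j. blinfun_apply (f' j (traj f x0 (\<lambda>i. u $ tm i) j, u $ tm j))) (\<lambda>j. h $ tm j) k)) (at u)"
proof (induction k)
  case 0
  then show ?case by simp
next
  case (Suc k)
  let ?p = "(traj f x0 (\<lambda>i. u $ tm i) k, u $ tm k)"
  let ?dX = "\<lambda>h. dx_traj (\<lambda>j. blinfun_apply (f' j (traj f x0 (\<lambda>i. u $ tm i) j, u $ tm j))) (\<lambda>j. h $ tm j) k"
  have ih: "((\<lambda>u::real^'nu^'t. traj f x0 (\<lambda>j. u $ tm j) k) has_derivative ?dX) (at u)"
    using Suc by simp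
  have nth: "((\<lambda>u::real^'nu^'t. u $ tm k) has_derivative (\<lambda>h. h $ tm k)) (at u)"
    by (rule bounded_linear.has_derivative[OF bounded_linear_vec_nth has_derivative_ident])
  have inner: "((\<lambda>u::real^'nu^'t. (traj f x0 (\<lambda>j. u $ tm j) k, u $ tm k)) has_derivative (\<lambda>h. (?dX h, h $ tm k))) (at u)"
    by (rule has_derivative_Pair[OF ih nth])
  have outer: "(f k has_derivative blinfun_apply (f' k ?p)) (at ?p)"
    using fd Suc.prems by simp
  have "((\<lambda>u::real^'nu^'t. f k (traj f x0 (\<lambda>j. u $ tm j) k, u $ tm k)) has_derivative
      (\<lambda>h. blinfun_apply (f' k ?p) (?dX h, h $ tm k))) (at u)"
    by (rule has_derivative_compose[OF inner outer])
  then show ?case by (simp add: blin_pair)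
qed

lemma dx_deriv:
  fixes f :: "nat \<Rightarrow> ((real^'nx) \<times> (real^'nu)) \<Rightarrow> real^'nx"
    and tm :: "nat \<Rightarrow> 't::finite"
    and ubar h :: "real^'nu^'t"
  assumes fd: "\<forall>k\<le>T. \<forall>p. (f k has_derivative blinfun_apply (f' k p)) (at p)"
    and fd2: "\<forall>k\<le>T. (f' k has_derivative f2 k) (at (traj f x0 (\<lambda>j. ubar $ tm j) k, ubar $ tm k))"
  shows "k \<le> T \<Longrightarrow> ((\<lambda>u::real^'nu^'t. dx_traj (\<lambda>j. blinfun_apply (f' j (traj f x0 (\<lambda>i. u $ tm i) j, u $ tm j))) (\<lambda>j. h $ tm j) k)
     has_derivative (\<lambda>v. Dxx (\<lambda>j. blinfun_apply (f' j (traj f x0 (\<lambda>i. ubar $ tm i) j, ubar $ tm j)))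
        (\<lambda>k v w. blinfun_apply (f2 k v) w) (\<lambda>j. h $ tm j) (\<lambda>j. v $ tm j) k)) (at ubar)"
proof (induction k)
  case 0
  then show ?case by simp
next
  case (Suc k)
  let ?L = "\<lambda>u j. blinfun_apply (f' j (traj f x0 (\<lambda>i. u $ tm i) j, u $ tm j))"
  let ?dX = "\<lambda>v. dx_traj (?L ubar) (\<lambda>j. v $ tm j) k"
  let ?p = "(traj f x0 (\<lambda>i. ubar $ tm i) k, ubar $ tm k)"
  have kT: "k \<le> T" using Suc.prems by simp
  have ih: "((\<lambda>u::real^'nu^'t. dx_traj (?L u) (\<lambda>j. h $ tm j) k) has_derivative
     (\<lambda>v. Dxx (?L ubar) (\<lambda>k v w. blinfun_apply (f2 k v) w) (\<lambda>j. h $ tm j) (\<lambda>j. v $ tm j) k)) (at ubar)"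
    using Suc kT by simp
  have tr: "((\<lambda>u::real^'nu^'t. traj f x0 (\<lambda>j. u $ tm j) k) has_derivative ?dX) (at ubar)"
    by (rule traj_deriv[OF fd kT])
  have nth: "((\<lambda>u::real^'nu^'t. u $ tm k) has_derivative (\<lambda>h. h $ tm k)) (at ubar)"
    by (rule bounded_linear.has_derivative[OF bounded_linear_vec_nth has_derivative_ident])
  have inner: "((\<lambda>u::real^'nu^'t. (traj f x0 (\<lambda>j. u $ tm j) k, u $ tm k)) has_derivative (\<lambda>v. (?dX v, v $ tm k))) (at ubar)"
    by (rule has_derivative_Pair[OF tr nth])
  have F: "((\<lambda>u::real^'nu^'t. f' k (traj f x0 (\<lambda>j. u $ tm j) k, u $ tm k)) has_derivative (\<lambda>v. f2 k (?dX v, v $ tm k))) (at ubar)"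
    by (rule has_derivative_compose[OF inner]) (use fd2 kT in simp)
  have G: "((\<lambda>u::real^'nu^'t. (dx_traj (?L u) (\<lambda>j. h $ tm j) k, h $ tm k)) has_derivative
     (\<lambda>v. (Dxx (?L ubar) (\<lambda>k v w. blinfun_apply (f2 k v) w) (\<lambda>j. h $ tm j) (\<lambda>j. v $ tm j) k, 0))) (at ubar)"
    by (rule has_derivative_Pair[OF ih has_derivative_const])
  have "((\<lambda>u::real^'nu^'t. blinfun_apply (f' k (traj f x0 (\<lambda>j. u $ tm j) k, u $ tm k)) (dx_traj (?L u) (\<lambda>j. h $ tm j) k, h $ tm k))
     has_derivative (\<lambda>v. blinfun_apply (f' k ?p) (Dxx (?L ubar) (\<lambda>k v w. blinfun_apply (f2 k v) w) (\<lambda>j. h $ tm j) (\<lambda>j. v $ tm j) k, 0)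
        + blinfun_apply (f2 k (?dX v, v $ tm k)) (dx_traj (?L ubar) (\<lambda>j. h $ tm j) k, h $ tm k))) (at ubar)"
    by (rule blinfun.FDERIV[OF F G])
  then show ?case by (simp add: blin_pair)
qed

lemma nash_cong:
  assumes "\<forall>n\<in>{1..N}. \<forall>du. S n du = D n du"
  shows "nash_eq N own S v = nash_eq N own D v"
  unfolding nash_eq_def using assms by simp

theorem lemma4:
  fixes N T :: nat
    and own :: "'nu::finite \<Rightarrow> nat"
    and tm :: "nat \<Rightarrow> 't::finite"
    and f :: "nat \<Rightarrow> ((real^'nx) \<times> (real^'nu)) \<Rightarrow> real^'nx"
    and x0 :: "real^'nx"
    and c :: "nat \<Rightarrow> nat \<Rightarrow> ((real^'nx) \<times> (real^'nu)) \<Rightarrow> real"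
    and ubar :: "real^'nu^'t"
    and f' :: "nat \<Rightarrow> ((real^'nx) \<times> (real^'nu)) \<Rightarrow> ((real^'nx) \<times> (real^'nu)) \<Rightarrow>\<^sub>L (real^'nx)"
    and f2 :: "nat \<Rightarrow> ((real^'nx) \<times> (real^'nu)) \<Rightarrow> ((real^'nx) \<times> (real^'nu)) \<Rightarrow>\<^sub>L (real^'nx)"
    and c' :: "nat \<Rightarrow> nat \<Rightarrow> ((real^'nx) \<times> (real^'nu)) \<Rightarrow> ((real^'nx) \<times> (real^'nu)) \<Rightarrow>\<^sub>L real"
    and c2 :: "nat \<Rightarrow> nat \<Rightarrow> ((real^'nx) \<times> (real^'nu)) \<Rightarrow> ((real^'nx) \<times> (real^'nu)) \<Rightarrow>\<^sub>L real"
    and DJ :: "nat \<Rightarrow> real^'nu^'t \<Rightarrow> (real^'nu^'t) \<Rightarrow>\<^sub>L real"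
    and D2J :: "nat \<Rightarrow> real^'nu^'t \<Rightarrow> (real^'nu^'t) \<Rightarrow>\<^sub>L real"
  assumes times: "bij_betw tm {..T} (UNIV :: 't set)"
    and owners: "\<forall>i. own i \<in> {1..N}"
    and f_diff: "\<forall>k\<le>T. \<forall>p. (f k has_derivative blinfun_apply (f' k p)) (at p)"
    and f_diff2: "\<forall>k\<le>T. (f' k has_derivative f2 k)
                     (at (traj f x0 (\<lambda>j. ubar $ tm j) k, ubar $ tm k))"
    and c_diff: "\<forall>n\<in>{1..N}. \<forall>k\<le>T. \<forall>p. (c n k has_derivative blinfun_apply (c' n k p)) (at p)"
    and c_diff2: "\<forall>n\<in>{1..N}. \<forall>k\<le>T. (c' n k has_derivative c2 n k)
                     (at (traj f x0 (\<lambda>j. ubar $ tm j) k, ubar $ tm k))"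
    and J_diff: "\<forall>n\<in>{1..N}. \<forall>u. (game_cost c f x0 T tm n has_derivative blinfun_apply (DJ n u)) (at u)"
    and J_diff2: "\<forall>n\<in>{1..N}. (DJ n has_derivative D2J n) (at ubar)"
  shows
    "let pbar = (\<lambda>k. (traj f x0 (\<lambda>j. ubar $ tm j) k, ubar $ tm k));
         static = (\<lambda>n du. game_cost c f x0 T tm n ubar + blinfun_apply (DJ n ubar) du
                     + 1/2 * blinfun_apply (D2J n du) du);
         L = (\<lambda>k. blinfun_apply (f' k (pbar k)));
         Q = (\<lambda>k v w. blinfun_apply (f2 k v) w);
         dynamic = (\<lambda>n du.
            1/2 * (\<Sum>k\<le>T.
               M_quad (c n k (pbar k)) (blinfun_apply (c' n k (pbar k)))
                      (\<lambda>v w. blinfun_apply (c2 n k v) w)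
                      (dx_traj L (\<lambda>j. du $ tm j) k) (du $ tm k)
               + blinfun_apply (c' n k (pbar k)) (Dx_traj L Q (\<lambda>j. du $ tm j) k, 0)))
     in (\<forall>n\<in>{1..N}. \<forall>du. static n du = dynamic n du)
        \<and> (\<forall>du. nash_eq N own static du \<longleftrightarrow> nash_eq N own dynamic du)"
proof -
  let ?P = "\<lambda>(u::real^'nu^'t) k. (traj f x0 (\<lambda>j. u $ tm j) k, u $ tm k)"
  let ?L = "\<lambda>u j. blinfun_apply (f' j (traj f x0 (\<lambda>i. u $ tm i) j, u $ tm j))"
  let ?Q = "\<lambda>k v w. blinfun_apply (f2 k v) w"
  let ?dX = "\<lambda>u (h::real^'nu^'t) k. dx_traj (?L u) (\<lambda>j. h $ tm j) k"
  have fdT: "\<forall>k\<le>T. \<forall>p. (f k has_derivative blinfun_apply (f' k p)) (at p)" by fact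
  have Pd: "((\<lambda>u::real^'nu^'t. ?P u k) has_derivative (\<lambda>h. (?dX u h k, h $ tm k))) (at u)"
    if "k \<le> T" for u k
  proof -
    have tr: "((\<lambda>u::real^'nu^'t. traj f x0 (\<lambda>j. u $ tm j) k) has_derivative (\<lambda>h. ?dX u h k)) (at u)"
      by (rule traj_deriv[OF fdT that])
    have nth: "((\<lambda>u::real^'nu^'t. u $ tm k) has_derivative (\<lambda>h. h $ tm k)) (at u)"
      by (rule bounded_linear.has_derivative[OF bounded_linear_vec_nth has_derivative_ident])
    show ?thesis using has_derivative_Pair[OF tr nth] by simp
  qed
  have main: "game_cost c f x0 T tm n ubar + blinfun_apply (DJ n ubar) du + 1/2 * blinfun_apply (D2J n du) du
     = 1/2 * (\<Sum>k\<le>T.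
               M_quad (c n k (?P ubar k)) (blinfun_apply (c' n k (?P ubar k)))
                      (\<lambda>v w. blinfun_apply (c2 n k v) w)
                      (?dX ubar du k) (du $ tm k)
               + blinfun_apply (c' n k (?P ubar k)) (Dx_traj (?L ubar) ?Q (\<lambda>j. du $ tm j) k, 0))"
    if n: "n \<in> {1..N}" for n du
  proof -
    have Jd: "(game_cost c f x0 T tm n has_derivative
        (\<lambda>h. \<Sum>k\<le>T. blinfun_apply (c' n k (?P u k)) (?dX u h k, h $ tm k))) (at u)" for u
    proof -
      have "((\<lambda>u. \<Sum>k\<le>T. c n k (?P u k)) has_derivative
        (\<lambda>h. \<Sum>k\<le>T. blinfun_apply (c' n k (?P u k)) (?dX u h k, h $ tm k))) (at u)"
      proof (rule has_derivative_sum)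
        fix k assume "k \<in> {..T}"
        then have kT: "k \<le> T" by simp
        show "((\<lambda>u. c n k (?P u k)) has_derivative
          (\<lambda>h. blinfun_apply (c' n k (?P u k)) (?dX u h k, h $ tm k))) (at u)"
          by (rule has_derivative_compose[OF Pd[OF kT]]) (use c_diff n kT in simp)
      qed
      then show ?thesis unfolding game_cost_def[abs_def] by simp
    qed
    have DJeq: "blinfun_apply (DJ n u) h = (\<Sum>k\<le>T. blinfun_apply (c' n k (?P u k)) (?dX u h k, h $ tm k))" for u h
    proof -
      have "blinfun_apply (DJ n u) = (\<lambda>h. \<Sum>k\<le>T. blinfun_apply (c' n k (?P u k)) (?dX u h k, h $ tm k))"
        by (rule has_derivative_unique[OF J_diff[rule_format, OF n] Jd])
      then show ?thesis by simp
    qed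
    have D1: "((\<lambda>u. blinfun_apply (DJ n u) du) has_derivative (\<lambda>v. blinfun_apply (D2J n v) du)) (at ubar)"
      using blinfun.FDERIV[OF J_diff2[rule_format, OF n] has_derivative_const[of du]] by simp
    have D2: "((\<lambda>u. \<Sum>k\<le>T. blinfun_apply (c' n k (?P u k)) (?dX u du k, du $ tm k)) has_derivative
       (\<lambda>v. \<Sum>k\<le>T. blinfun_apply (c' n k (?P ubar k)) (Dxx (?L ubar) ?Q (\<lambda>j. du $ tm j) (\<lambda>j. v $ tm j) k, 0)
          + blinfun_apply (c2 n k (?dX ubar v k, v $ tm k)) (?dX ubar du k, du $ tm k))) (at ubar)"
    proof (rule has_derivative_sum)
      fix k assume "k \<in> {..T}"
      then have kT: "k \<le> T" by simp
      have F: "((\<lambda>u. c' n k (?P u k)) has_derivative (\<lambda>v. c2 n k (?dX ubar v k, v $ tm k))) (at ubar)"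
        by (rule has_derivative_compose[OF Pd[OF kT]]) (use c_diff2 n kT in simp)
      have G: "((\<lambda>u. (?dX u du k, du $ tm k)) has_derivative
          (\<lambda>v. (Dxx (?L ubar) ?Q (\<lambda>j. du $ tm j) (\<lambda>j. v $ tm j) k, 0))) (at ubar)"
        by (rule has_derivative_Pair[OF dx_deriv[OF fdT f_diff2 kT] has_derivative_const])
      show "((\<lambda>u. blinfun_apply (c' n k (?P u k)) (?dX u du k, du $ tm k)) has_derivative
       (\<lambda>v. blinfun_apply (c' n k (?P ubar k)) (Dxx (?L ubar) ?Q (\<lambda>j. du $ tm j) (\<lambda>j. v $ tm j) k, 0)
          + blinfun_apply (c2 n k (?dX ubar v k, v $ tm k)) (?dX ubar du k, du $ tm k))) (at ubar)"
        using blinfun.FDERIV[OF F G] by simp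
    qed
    have D1': "((\<lambda>u. \<Sum>k\<le>T. blinfun_apply (c' n k (?P u k)) (?dX u du k, du $ tm k)) has_derivative
         (\<lambda>v. blinfun_apply (D2J n v) du)) (at ubar)"
      using D1 by (simp add: DJeq)
    have D2eq: "blinfun_apply (D2J n du) du = (\<Sum>k\<le>T. blinfun_apply (c' n k (?P ubar k)) (Dx_traj (?L ubar) ?Q (\<lambda>j. du $ tm j) k, 0)
          + blinfun_apply (c2 n k (?dX ubar du k, du $ tm k)) (?dX ubar du k, du $ tm k))"
      using fun_cong[OF has_derivative_unique[OF D1' D2], of du] by (simp add: Dxx_diag)
    have bl: "bounded_linear (c2 n k)" if "k \<le> T" for k
      using c_diff2 n that has_derivative_bounded_linear by blast
    have Mq: "M_quad (c n k (?P ubar k)) (blinfun_apply (c' n k (?P ubar k)))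
                      (\<lambda>v w. blinfun_apply (c2 n k v) w) (?dX ubar du k) (du $ tm k)
        = 2 * c n k (?P ubar k) + 2 * blinfun_apply (c' n k (?P ubar k)) (?dX ubar du k, du $ tm k)
          + blinfun_apply (c2 n k (?dX ubar du k, du $ tm k)) (?dX ubar du k, du $ tm k)" if "k \<le> T" for k
    proof -
      have e: "blinfun_apply (c' n k (?P ubar k)) (?dX ubar du k, du $ tm k)
         = blinfun_apply (c' n k (?P ubar k)) (?dX ubar du k, 0) + blinfun_apply (c' n k (?P ubar k)) (0, du $ tm k)"
        by (rule blin_pair[symmetric])
      show ?thesis
        unfolding M_quad_def quad_split[OF bl[OF that], of "?dX ubar du k" "du $ tm k"] e by simp
    qed
    have "game_cost c f x0 T tm n ubar + blinfun_apply (DJ n ubar) du + 1/2 * blinfun_apply (D2J n du) du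
      = (\<Sum>k\<le>T. c n k (?P ubar k)) + (\<Sum>k\<le>T. blinfun_apply (c' n k (?P ubar k)) (?dX ubar du k, du $ tm k))
        + 1/2 * (\<Sum>k\<le>T. blinfun_apply (c' n k (?P ubar k)) (Dx_traj (?L ubar) ?Q (\<lambda>j. du $ tm j) k, 0)
          + blinfun_apply (c2 n k (?dX ubar du k, du $ tm k)) (?dX ubar du k, du $ tm k))"
      unfolding D2eq DJeq game_cost_def by simp
    also have "\<dots> = 1/2 * (\<Sum>k\<le>T. (2 * c n k (?P ubar k) + 2 * blinfun_apply (c' n k (?P ubar k)) (?dX ubar du k, du $ tm k)
          + blinfun_apply (c2 n k (?dX ubar du k, du $ tm k)) (?dX ubar du k, du $ tm k))
          + blinfun_apply (c' n k (?P ubar k)) (Dx_traj (?L ubar) ?Q (\<lambda>j. du $ tm j) k, 0))"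
      by (simp add: sum.distrib sum_distrib_left algebra_simps)
    also have "\<dots> = 1/2 * (\<Sum>k\<le>T.
               M_quad (c n k (?P ubar k)) (blinfun_apply (c' n k (?P ubar k)))
                      (\<lambda>v w. blinfun_apply (c2 n k v) w)
                      (?dX ubar du k) (du $ tm k)
               + blinfun_apply (c' n k (?P ubar k)) (Dx_traj (?L ubar) ?Q (\<lambda>j. du $ tm j) k, 0))"
      by (intro arg_cong[where f="\<lambda>x. 1/2 * x"] sum.cong refl) (simp add: Mq)
    finally show ?thesis .
  qed
  show ?thesis
    unfolding Let_def
  proof
    show A: "\<forall>n\<in>{1..N}. \<forall>du. game_cost c f x0 T tm n ubar + blinfun_apply (DJ n ubar) du + 1/2 * blinfun_apply (D2J n du) du
     = 1/2 * (\<Sum>k\<le>T.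
               M_quad (c n k (?P ubar k)) (blinfun_apply (c' n k (?P ubar k)))
                      (\<lambda>v w. blinfun_apply (c2 n k v) w)
                      (?dX ubar du k) (du $ tm k)
               + blinfun_apply (c' n k (?P ubar k)) (Dx_traj (?L ubar) ?Q (\<lambda>j. du $ tm j) k, 0))"
      using main by blast
    show "\<forall>du. nash_eq N own (\<lambda>n du. game_cost c f x0 T tm n ubar + blinfun_apply (DJ n ubar) du + 1/2 * blinfun_apply (D2J n du) du) du
      = nash_eq N own (\<lambda>n du. 1/2 * (\<Sum>k\<le>T.
               M_quad (c n k (?P ubar k)) (blinfun_apply (c' n k (?P ubar k)))
                      (\<lambda>v w. blinfun_apply (c2 n k v) w)
                      (?dX ubar du k) (du $ tm k)
               + blinfun_apply (c' n k (?P ubar k)) (Dx_traj (?L ubar) ?Q (\<lambda>j. du $ tm j) k, 0))) du"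
      by (intro allI nash_cong) (rule A)
  qed
qed

end
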